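(* Suppose that $\alpha>0$ is irrational and $\bm f\in\mathscr{F}$ is such that $|f_\infty|$ is bounded away from zero. Then $y_\alpha^{\bm f}$ is nowhere differentiable on $[0,1]$.
   Context: Faber--Schauder functions: $e_{0,0}(t)=\max\{0,\min\{t,1-t\}\}$, $e_{n,k}(t)=2^{-n/2}e_{0,0}(2^nt-k)$ for $n\ge1$, $k=0,\dots,2^n-1$. $\mathscr{F}$ is the class of sequences $\bm f=(f_n)_{n\ge0}$ of bounded functions $f_n:[0,1]\to\mathbb{R}$ converging uniformly to a Riemann integrable function $f_\infty$. For $t\ge0$, $t\bmod 1:=t-\lfloor t\rfloor$. For $\bm f\in\mathscr{F}$ and $\alpha>0$, $y_\alpha^{\bm f}:=\sum_{n=0}^\infty\sum_{k=0}^{2^n-1}f_n(\alpha k\bmod 1)\,e_{n,k}$. *)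

theory Defs
  imports "HOL-Analysis.Analysis"
begin

definition schauder0 :: "real \<Rightarrow> real" where
  "schauder0 t = max 0 (min t (1 - t))"

definition schauder :: "nat \<Rightarrow> nat \<Rightarrow> real \<Rightarrow> real" where
  "schauder n k t = 2 powr (- real n / 2) * schauder0 (2 ^ n * t - real k)"

definition riemann_integrable_on :: "(real \<Rightarrow> real) \<Rightarrow> real \<Rightarrow> real \<Rightarrow> bool" where
  "riemann_integrable_on g a b \<longleftrightarrow>
     (\<exists>I. \<forall>\<epsilon>>0. \<exists>\<delta>>0. \<forall>D. D tagged_division_of {a..b} \<and> (\<lambda>x. ball x \<delta>) fine D \<longrightarrow>
        \<bar>(\<Sum>(x, K)\<in>D. Henstock_Kurzweil_Integration.content K * g x) - I\<bar> < \<epsilon>)"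

definition classF :: "(nat \<Rightarrow> real \<Rightarrow> real) \<Rightarrow> (real \<Rightarrow> real) \<Rightarrow> bool" where
  "classF f finf \<longleftrightarrow> (\<forall>n. bounded (f n ` {0..1})) \<and>
     uniform_limit {0..1} f finf sequentially \<and> riemann_integrable_on finf 0 1"

definition y_alpha :: "real \<Rightarrow> (nat \<Rightarrow> real \<Rightarrow> real) \<Rightarrow> real \<Rightarrow> real" where
  "y_alpha \<alpha> f t = (\<Sum>n. \<Sum>k<2 ^ n. f n (frac (\<alpha> * real k)) * schauder n k t)"

end

theory Submission
  imports Defs
begin

lemma schauder0_int: "schauder0 (of_int z) = 0"
proof (cases "z \<le> 0")
  case True then have "real_of_int z \<le> 0" by simp
  then show ?thesis unfolding schauder0_def by (simp add: max_def min_def)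
next
  case False then have "real_of_int z \<ge> 1" by simp
  then show ?thesis unfolding schauder0_def by (simp add: max_def min_def)
qed

lemma schauder0_half: "schauder0 (of_int z + 1/2) = (if z = 0 then 1/2 else 0)"
proof -
  consider "z \<le> -1" | "z = 0" | "z \<ge> 1" by linarith
  then show ?thesis
  proof cases
    case 1 then have "real_of_int z \<le> -1" by simp
    then show ?thesis unfolding schauder0_def using 1 by (simp add: max_def min_def)
  next
    case 2 then show ?thesis unfolding schauder0_def by (simp add: max_def min_def)
  next
    case 3 then have "real_of_int z \<ge> 1" by simp
    then show ?thesis unfolding schauder0_def using 3 by (simp add: max_def min_def)
  qed
qed

lemma s0_neg: "x \<le> 0 \<Longrightarrow> schauder0 x = 0" unfolding schauder0_def by (simp add: max_def min_def)
lemma s0_big: "x \<ge> 1 \<Longrightarrow> schauder0 x = 0" unfolding schauder0_def by (simp add: max_def min_def)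
lemma s0_l: "0 \<le> x \<Longrightarrow> x \<le> 1/2 \<Longrightarrow> schauder0 x = x" unfolding schauder0_def by (simp add: max_def min_def)
lemma s0_r: "1/2 \<le> x \<Longrightarrow> x \<le> 1 \<Longrightarrow> schauder0 x = 1 - x" unfolding schauder0_def by (simp add: max_def min_def)

lemma schauder0_cell:
  fixes q :: int and a b :: real
  assumes "of_int q / 2 \<le> a" "a \<le> b" "b \<le> (of_int q + 1) / 2"
  shows "schauder0 ((a+b)/2) = (schauder0 a + schauder0 b) / 2"
proof -
  consider "q \<le> -1" | "q = 0" | "q = 1" | "q \<ge> 2" by linarith
  then show ?thesis
  proof cases
    case 1 then have "real_of_int q \<le> -1" by simp
    then show ?thesis using assms by (simp add: s0_neg)
  next
    case 2 then show ?thesis using assms by (simp add: s0_l)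
  next
    case 3 then show ?thesis using assms by (simp add: s0_r field_simps)
  next
    case 4 then have "real_of_int q \<ge> 2" by simp
    then show ?thesis using assms by (simp add: s0_big)
  qed
qed

lemma schauder_vanish:
  assumes "N \<le> m"
  shows "schauder m k (real j / 2 ^ N) = 0"
proof -
  have "(2::real) ^ m * (real j / 2 ^ N) - real k = of_int (int (j * 2 ^ (m - N)) - int k)"
  proof -
    have "(2::real)^m = 2^N * 2^(m-N)" using assms by (simp flip: power_add)
    then show ?thesis by simp
  qed
  then have "schauder0 ((2::real) ^ m * (real j / 2 ^ N) - real k) = 0" by (simp only: schauder0_int)
  then show ?thesis unfolding schauder_def by simp
qed

definition S :: "(nat \<Rightarrow> nat \<Rightarrow> real) \<Rightarrow> nat \<Rightarrow> real \<Rightarrow> real" where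
  "S a N x = (\<Sum>m<N. \<Sum>k<2 ^ m. a m k * schauder m k x)"

lemma y_dyadic:
  "y_alpha \<alpha> f (real j / 2 ^ N) = S (\<lambda>m k. f m (frac (\<alpha> * real k))) N (real j / 2 ^ N)"
  unfolding y_alpha_def S_def
  by (rule suminf_finite) (auto simp: schauder_vanish)


lemma level_lt:
  assumes "m < n"
  shows "schauder m k ((2 * real k0 + 1) / 2 ^ (n+1)) =
    (schauder m k (real k0 / 2 ^ n) + schauder m k ((real k0 + 1) / 2 ^ n)) / 2"
proof -
  define d where "d = n - m - 1"
  have n: "n = m + 1 + d" using assms unfolding d_def by simp
  define ua where "ua = (2::real) ^ m * (real k0 / 2 ^ n) - real k"
  define ub where "ub = (2::real) ^ m * ((real k0 + 1) / 2 ^ n) - real k"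
  have mid: "(2::real) ^ m * ((2 * real k0 + 1) / 2 ^ (n+1)) - real k = (ua + ub) / 2"
    unfolding ua_def ub_def by (simp add: field_simps)
  have ua2: "2 * ua = real k0 / 2 ^ d - 2 * real k"
    unfolding ua_def n by (simp add: field_simps power_add)
  have ub2: "2 * ub = (real k0 + 1) / 2 ^ d - 2 * real k"
    unfolding ub_def n by (simp add: field_simps power_add)
  define q where "q = int (k0 div 2 ^ d) - 2 * int k"
  have "real (k0 div 2 ^ d) \<le> real k0 / 2 ^ d"
    using of_nat_div_le_of_nat[of k0 "2^d", where 'a=real] by simp
  then have h1: "of_int q / 2 \<le> ua" using ua2 unfolding q_def by simp
  have "real k0 / 2 ^ d \<le> (real k0 + 1) / 2 ^ d" by (simp add: divide_right_mono)
  then have h2: "ua \<le> ub" using ua2 ub2 by linarith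
  have "k0 + 1 \<le> 2 ^ d * (k0 div 2 ^ d + 1)"
  proof -
    have "k0 mod 2 ^ d < 2 ^ d" by simp
    moreover have "k0 = 2 ^ d * (k0 div 2 ^ d) + k0 mod 2 ^ d" by simp
    moreover have "2 ^ d * (k0 div 2 ^ d + 1) = 2 ^ d * (k0 div 2 ^ d) + (2::nat) ^ d" by simp
    ultimately show ?thesis by linarith
  qed
  then have "real (k0 + 1) \<le> real (2 ^ d * (k0 div 2 ^ d + 1))"
    by (simp only: of_nat_le_iff)
  then have "real k0 + 1 \<le> 2 ^ d * (real (k0 div 2 ^ d) + 1)" by (simp add: distrib_left)
  then have "(real k0 + 1) / 2 ^ d \<le> real (k0 div 2 ^ d) + 1"
    by (simp add: field_simps)
  then have h3: "ub \<le> (of_int q + 1) / 2" using ub2 unfolding q_def by simp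
  have e: "schauder0 ((ua+ub)/2) = (schauder0 ua + schauder0 ub) / 2"
    using schauder0_cell[OF h1 h2 h3] .
  show ?thesis unfolding schauder_def mid ua_def[symmetric] ub_def[symmetric] e
    by (simp add: algebra_simps add_divide_distrib)
qed

lemma level_eq:
  shows "schauder n k ((2 * real k0 + 1) / 2 ^ (n+1)) -
    (schauder n k (real k0 / 2 ^ n) + schauder n k ((real k0 + 1) / 2 ^ n)) / 2
    = (if k = k0 then 2 powr (- real n / 2) / 2 else 0)"
proof -
  have a: "(2::real) ^ n * (real k0 / 2 ^ n) - real k = of_int (int k0 - int k)" by simp
  have b: "(2::real) ^ n * ((real k0 + 1) / 2 ^ n) - real k = of_int (int k0 + 1 - int k)" by simp
  have c: "(2::real) ^ n * ((2 * real k0 + 1) / 2 ^ (n+1)) - real k = of_int (int k0 - int k) + 1/2"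
    by (simp add: field_simps)
  show ?thesis unfolding schauder_def a b c schauder0_int schauder0_half by auto
qed


lemma abs3: "\<bar>x::real\<bar> \<le> B \<Longrightarrow> \<bar>y\<bar> \<le> B \<Longrightarrow> \<bar>z\<bar> \<le> B \<Longrightarrow> \<bar>x - y/2 - z/2\<bar> \<le> 2 * B"
  by (simp add: abs_le_iff)

lemma second_diff:
  assumes "k0 < 2 ^ n"
  shows "S a (n+1) ((2 * real k0 + 1) / 2 ^ (n+1)) -
    (S a (n+1) (real k0 / 2 ^ n) + S a (n+1) ((real k0 + 1) / 2 ^ n)) / 2
    = a n k0 * (2 powr (- real n / 2) / 2)"
proof -
  define mi where "mi = (2 * real k0 + 1) / 2 ^ (n+1)"
  define l where "l = real k0 / 2 ^ n"
  define r where "r = (real k0 + 1) / 2 ^ n"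
  have "S a (n+1) mi - (S a (n+1) l + S a (n+1) r) / 2 =
    (\<Sum>m<n+1. \<Sum>k<2^m. a m k * (schauder m k mi - (schauder m k l + schauder m k r) / 2))"
    unfolding S_def by (simp add: ring_distribs add_divide_distrib sum_subtractf sum.distrib sum_divide_distrib)
  also have "\<dots> = (\<Sum>m<n. \<Sum>k<2^m. a m k * (schauder m k mi - (schauder m k l + schauder m k r) / 2))
      + (\<Sum>k<2^n. a n k * (schauder n k mi - (schauder n k l + schauder n k r) / 2))"
    by simp
  also have "(\<Sum>m<n. \<Sum>k<2^m. a m k * (schauder m k mi - (schauder m k l + schauder m k r) / 2)) = 0"
    unfolding mi_def l_def r_def by (intro sum.neutral ballI, subst level_lt) auto
  also have "(\<Sum>k<2^n. a n k * (schauder n k mi - (schauder n k l + schauder n k r) / 2))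
     = (\<Sum>k<2^n. if k = k0 then a n k * (2 powr (- real n / 2) / 2) else 0)"
    unfolding mi_def l_def r_def level_eq by (intro sum.cong) auto
  also have "\<dots> = a n k0 * (2 powr (- real n / 2) / 2)"
    using assms by simp
  finally show ?thesis unfolding mi_def l_def r_def by simp
qed

theorem proposition2p7:
  fixes \<alpha> :: real and f :: "nat \<Rightarrow> real \<Rightarrow> real" and finf :: "real \<Rightarrow> real"
  assumes "\<alpha> > 0" and "\<alpha> \<notin> \<rat>"
    and "classF f finf"
    and "\<exists>c>0. \<forall>t\<in>{0..1}. \<bar>finf t\<bar> \<ge> c"
  shows "\<forall>t\<in>{0..1}. \<not> (y_alpha \<alpha> f) differentiable (at t within {0..1})"
proof (intro ballI notI)
  fix t :: real
  assume t: "t \<in> {0..1}"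
  assume "(y_alpha \<alpha> f) differentiable (at t within {0..1})"
  then obtain D where D: "(y_alpha \<alpha> f has_derivative D) (at t within {0..1})"
    unfolding differentiable_def by blast
  define Y where "Y = y_alpha \<alpha> f"
  define a where "a = (\<lambda>m k. f m (frac (\<alpha> * real k)))"
  obtain c where c: "c > 0" "\<forall>t\<in>{0..1}. \<bar>finf t\<bar> \<ge> c" using assms(4) by blast
  have bl: "bounded_linear D" using D by (simp add: has_derivative_within_alt)
  have Dlin: "D x = x * D 1" for x
    using bl unfolding real_bounded_linear by auto
  obtain \<delta> where \<delta>: "\<delta> > 0"
    "\<forall>s\<in>{0..1}. norm (s - t) < \<delta> \<longrightarrow> norm (Y s - Y t - D (s - t)) \<le> c/16 * norm (s - t)"
    using D c(1) unfolding has_derivative_within_alt Y_def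
    by (metis divide_pos_pos zero_less_numeral)
  have ul: "uniform_limit {0..1} f finf sequentially" using assms(3) unfolding classF_def by blast
  from uniform_limitD[OF ul, of "c/2"] c(1)
  obtain N1 where N1: "\<And>n. n \<ge> N1 \<Longrightarrow> \<forall>x\<in>{0..1}. dist (f n x) (finf x) < c/2"
    unfolding eventually_sequentially by auto
  obtain N2 where N2: "(1/2::real) ^ N2 < \<delta>" using real_arch_pow_inv[OF \<delta>(1), of "1/2"] by auto
  define n where "n = max N1 N2"
  have hn: "(1/2::real) ^ n < \<delta>"
  proof -
    have "(1/2::real)^n \<le> (1/2)^N2" by (rule power_decreasing) (auto simp: n_def)
    then show ?thesis using N2 by linarith
  qed
  define k0 :: nat where "k0 = (if t < 1 then nat \<lfloor>2 ^ n * t\<rfloor> else 2 ^ n - 1)"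
  define l where "l = real k0 / 2 ^ n"
  define r where "r = (real k0 + 1) / 2 ^ n"
  define mi where "mi = (2 * real k0 + 1) / 2 ^ (n+1)"
  have k0: "k0 < 2 ^ n" and lt: "l \<le> t" and tr: "t \<le> r"
  proof -
    have "k0 < 2 ^ n \<and> l \<le> t \<and> t \<le> r"
    proof (cases "t < 1")
      case True
      have fl0: "0 \<le> \<lfloor>2 ^ n * t\<rfloor>" using t by simp
      have fl1: "\<lfloor>2 ^ n * t\<rfloor> \<le> 2 ^ n * t" by simp
      have fl2: "2 ^ n * t < \<lfloor>2 ^ n * t\<rfloor> + 1" by linarith
      have "2 ^ n * t < 2 ^ n" using True by simp
      then have "\<lfloor>2 ^ n * t\<rfloor> < 2 ^ n"
        by (simp add: floor_less_iff)
      then have a1: "k0 < 2 ^ n" using True fl0 unfolding k0_def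
        by (simp add: nat_less_iff)
      have rk: "real k0 = real_of_int \<lfloor>2 ^ n * t\<rfloor>" using True fl0 unfolding k0_def by simp
      have "l \<le> t" unfolding l_def rk using fl1 by (simp add: field_simps)
      moreover have "t \<le> r" unfolding r_def rk using fl2 by (simp add: field_simps)
      ultimately show ?thesis using a1 by simp
    next
      case False
      then have t1: "t = 1" using t by simp
      have rk: "real k0 = 2 ^ n - 1" using False unfolding k0_def
        by (simp add: of_nat_diff)
      show ?thesis unfolding l_def r_def rk t1 using False unfolding k0_def by simp
    qed
    then show "k0 < 2 ^ n" "l \<le> t" "t \<le> r" by auto
  qed
  have rl: "r - l = (1/2) ^ n" unfolding r_def l_def by (simp add: field_simps power_one_over)
  have mil: "mi = (l + r) / 2" unfolding mi_def l_def r_def by (simp add: field_simps)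
  have l0: "0 \<le> l" unfolding l_def by simp
  have r1: "r \<le> 1"
  proof -
    have "k0 + 1 \<le> 2 ^ n" using k0 by simp
    then have "real (k0 + 1) \<le> real (2 ^ n)" by (simp only: of_nat_le_iff)
    then show ?thesis unfolding r_def by (simp add: field_simps)
  qed
  have inI: "x \<in> {0..1}" if "l \<le> x" "x \<le> r" for x using that l0 r1 by simp
  have close: "norm (x - t) \<le> (1/2)^n" if "l \<le> x" "x \<le> r" for x
    using that lt tr rl by simp
  have E: "norm (Y x - Y t - D (x - t)) \<le> c/16 * (1/2)^n" if "l \<le> x" "x \<le> r" for x
  proof -
    have "norm (Y x - Y t - D (x - t)) \<le> c/16 * norm (x - t)"
      using \<delta>(2) inI[OF that] close[OF that] hn by force
    also have "\<dots> \<le> c/16 * (1/2)^n" using close[OF that] c(1) by (intro mult_left_mono) auto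
    finally show ?thesis .
  qed
  have Em: "norm (Y mi - Y t - D (mi - t)) \<le> c/16 * (1/2)^n" using E mil lt tr by simp
  have El: "norm (Y l - Y t - D (l - t)) \<le> c/16 * (1/2)^n" using E lt tr by simp
  have Er: "norm (Y r - Y t - D (r - t)) \<le> c/16 * (1/2)^n" using E lt tr by simp
  have comb: "Y mi - (Y l + Y r) / 2 = (Y mi - Y t - D (mi - t))
      - (Y l - Y t - D (l - t)) / 2 - (Y r - Y t - D (r - t)) / 2"
  proof -
    have "D (mi - t) - D (l - t) / 2 - D (r - t) / 2 = (mi - t - (l - t) / 2 - (r - t) / 2) * D 1"
      by (simp only: Dlin[of "mi - t"] Dlin[of "l - t"] Dlin[of "r - t"]) (simp add: algebra_simps)
    also have "\<dots> = 0" unfolding mil by (simp add: field_simps)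
    finally have "D (mi - t) - D (l - t) / 2 - D (r - t) / 2 = 0" .
    then show ?thesis by (simp add: field_simps)
  qed
  have up: "\<bar>Y mi - (Y l + Y r) / 2\<bar> \<le> 2 * (c/16 * (1/2)^n)"
    unfolding comb using abs3[OF Em[unfolded real_norm_def] El[unfolded real_norm_def] Er[unfolded real_norm_def]] .
  have eql: "l = real (2*k0) / 2 ^ (n+1)" unfolding l_def by simp
  have eqr: "r = real (2*k0+2) / 2 ^ (n+1)" unfolding r_def by (simp add: field_simps)
  have eqm: "mi = real (2*k0+1) / 2 ^ (n+1)" unfolding mi_def by simp
  have "Y mi - (Y l + Y r) / 2 = S a (n+1) mi - (S a (n+1) l + S a (n+1) r) / 2"
  proof -
    have "Y l = S a (n+1) l" unfolding Y_def a_def eql by (rule y_dyadic)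
    moreover have "Y r = S a (n+1) r" unfolding Y_def a_def eqr by (rule y_dyadic)
    moreover have "Y mi = S a (n+1) mi" unfolding Y_def a_def eqm by (rule y_dyadic)
    ultimately show ?thesis by simp
  qed
  also have "\<dots> = a n k0 * (2 powr (- real n / 2) / 2)"
    unfolding mi_def l_def r_def using second_diff[OF k0] .
  finally have eq: "Y mi - (Y l + Y r) / 2 = a n k0 * (2 powr (- real n / 2) / 2)" .
  have fx: "frac (\<alpha> * real k0) \<in> {0..1}" using frac_ge_0 frac_lt_1 less_imp_le by auto
  have "n \<ge> N1" unfolding n_def by simp
  then have "dist (f n (frac (\<alpha> * real k0))) (finf (frac (\<alpha> * real k0))) < c/2"
    using N1 fx by blast
  moreover have "\<bar>finf (frac (\<alpha> * real k0))\<bar> \<ge> c" using c(2) fx by blast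
  ultimately have ab: "\<bar>a n k0\<bar> \<ge> c/2" unfolding a_def dist_real_def by linarith
  have sp: "2 powr (- real n / 2) \<ge> (1/2::real)^n"
  proof -
    have "(1/2::real)^n = 2 powr (- real n)"
      by (simp add: powr_minus powr_realpow power_one_over inverse_eq_divide)
    also have "\<dots> \<le> 2 powr (- real n / 2)" by (intro powr_mono) auto
    finally show ?thesis .
  qed
  have hpos: "(0::real) < (1/2)^n" by simp
  have "c/2 * ((1/2)^n / 2) \<le> \<bar>a n k0\<bar> * (2 powr (- real n / 2) / 2)"
    using ab sp c(1) hpos by (intro mult_mono) auto
  also have "\<dots> = \<bar>Y mi - (Y l + Y r) / 2\<bar>" unfolding eq by (simp add: abs_mult)
  also have "\<dots> \<le> 2 * (c/16 * (1/2)^n)" by (rule up)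
  finally have "c/2 * ((1/2)^n / 2) \<le> 2 * (c/16 * (1/2)^n)" .
  then show False using c(1) hpos by (simp add: field_simps)
qed

end
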